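(* There is a constant $c>0$ such that the following holds for all $n\ge 2$. Let $q,t_1,\dots,t_n$ be $n+1$ distinct qubits, and for each $i$ let $D_i$ be an arbitrary diagonal two-qubit unitary gate acting on the pair $(q,t_i)$. Then the operator $D_nD_{n-1}\cdots D_1$ can be embedded, using at most $cn$ ancillae, in a quantum circuit of depth at most $c\log n$.
   Context: Qubits have computational basis $|0\rangle,|1\rangle$. A diagonal two-qubit gate is a unitary of the form $\mathrm{diag}(e^{i\theta_{00}},e^{i\theta_{01}},e^{i\theta_{10}},e^{i\theta_{11}})$ in the computational basis. A one-layer circuit is a tensor product of arbitrary one-qubit and two-qubit unitary gates acting on pairwise disjoint sets of qubits; a circuit of depth $k$ is a product of $k$ one-layer circuits. An operator $F$ on $n'$ qubits is embedded in an operator $M$ on $n'+m$ qubits using $m$ ancillae if $M(|\psi\rangle\otimes|0\cdots0\rangle)=(F|\psi\rangle)\otimes|0\cdots0\rangle$ for all $|\psi\rangle$, where the last $m$ qubits are the ancillae. *)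

theory Defs
  imports Complex_Main "Jordan_Normal_Form.Matrix"
begin

text \<open>Conventions. An operator on N qubits is a complex 2^N x 2^N matrix acting on
column vectors indexed by 0..2^N-1; the value of qubit k in basis index i is bit k of i.\<close>

definition bitq :: "nat \<Rightarrow> nat \<Rightarrow> nat" where
  "bitq k i = (i div 2 ^ k) mod 2"

definition adj :: "complex mat \<Rightarrow> complex mat" where
  "adj U = mat (dim_col U) (dim_row U) (\<lambda>(i, j). cnj (U $$ (j, i)))"

definition unitary_mat :: "nat \<Rightarrow> complex mat \<Rightarrow> bool" where
  "unitary_mat d U \<longleftrightarrow> U \<in> carrier_mat d d \<and> U * adj U = 1\<^sub>m d"

definition gate1_op :: "nat \<Rightarrow> nat \<Rightarrow> complex mat \<Rightarrow> complex mat" where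
  "gate1_op N a U = mat (2 ^ N) (2 ^ N) (\<lambda>(i, j).
     if (\<forall>k. k \<noteq> a \<longrightarrow> bitq k i = bitq k j) then U $$ (bitq a i, bitq a j) else 0)"

definition gate2_op :: "nat \<Rightarrow> nat \<Rightarrow> nat \<Rightarrow> complex mat \<Rightarrow> complex mat" where
  "gate2_op N a b U = mat (2 ^ N) (2 ^ N) (\<lambda>(i, j).
     if (\<forall>k. k \<noteq> a \<and> k \<noteq> b \<longrightarrow> bitq k i = bitq k j)
     then U $$ (2 * bitq a i + bitq b i, 2 * bitq a j + bitq b j) else 0)"

datatype gate = G1 nat "complex mat" | G2 nat nat "complex mat"

fun gate_supp :: "gate \<Rightarrow> nat set" where
  "gate_supp (G1 a U) = {a}"
| "gate_supp (G2 a b U) = {a, b}"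

fun valid_gate :: "nat \<Rightarrow> gate \<Rightarrow> bool" where
  "valid_gate N (G1 a U) \<longleftrightarrow> a < N \<and> unitary_mat 2 U"
| "valid_gate N (G2 a b U) \<longleftrightarrow> a < N \<and> b < N \<and> a \<noteq> b \<and> unitary_mat 4 U"

fun gate_op :: "nat \<Rightarrow> gate \<Rightarrow> complex mat" where
  "gate_op N (G1 a U) = gate1_op N a U"
| "gate_op N (G2 a b U) = gate2_op N a b U"

definition valid_layer :: "nat \<Rightarrow> gate list \<Rightarrow> bool" where
  "valid_layer N L \<longleftrightarrow> (\<forall>g \<in> set L. valid_gate N g) \<and>
     (\<forall>i < length L. \<forall>j < length L. i \<noteq> j \<longrightarrow> gate_supp (L ! i) \<inter> gate_supp (L ! j) = {})"

definition layer_op :: "nat \<Rightarrow> gate list \<Rightarrow> complex mat" where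
  "layer_op N L = foldr (\<lambda>g M. gate_op N g * M) L (1\<^sub>m (2 ^ N))"

text \<open>A circuit of depth k = list of k layers; its operator is their product.\<close>
definition circuit_op :: "nat \<Rightarrow> gate list list \<Rightarrow> complex mat" where
  "circuit_op N C = foldr (\<lambda>L M. layer_op N L * M) C (1\<^sub>m (2 ^ N))"

text \<open>|psi> (x) |0...0>, ancillae being the last m qubits (high bits).\<close>
definition pad_anc :: "nat \<Rightarrow> nat \<Rightarrow> complex vec \<Rightarrow> complex vec" where
  "pad_anc n' m \<psi> = vec (2 ^ (n' + m)) (\<lambda>i. if i < 2 ^ n' then \<psi> $ i else 0)"

definition embeds :: "nat \<Rightarrow> nat \<Rightarrow> complex mat \<Rightarrow> complex mat \<Rightarrow> bool" where
  "embeds n' m F M \<longleftrightarrow>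
     (\<forall>\<psi> \<in> carrier_vec (2 ^ n'). M *\<^sub>v pad_anc n' m \<psi> = pad_anc n' m (F *\<^sub>v \<psi>))"

definition diag_gate :: "(nat \<Rightarrow> real) \<Rightarrow> complex mat" where
  "diag_gate th = mat 4 4 (\<lambda>(i, j). if i = j then exp (\<i> * complex_of_real (th i)) else 0)"

definition diag_product :: "nat \<Rightarrow> nat \<Rightarrow> (nat \<Rightarrow> nat) \<Rightarrow> (nat \<Rightarrow> nat \<Rightarrow> real) \<Rightarrow> complex mat" where
  "diag_product n q t th =
     foldr (\<lambda>i M. gate2_op (n + 1) q (t i) (diag_gate (th i)) * M) (rev [1..<n + 1]) (1\<^sub>m (2 ^ (n + 1)))"

end

theory Submission
  imports Defs
begin

lemma bitq_bit: "bitq k i = of_bool (bit i k)"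
  by (simp add: bitq_def bit_iff_odd odd_iff_mod_2_eq_one)

lemma less_pow_iff_bits: "(x::nat) < 2^N \<longleftrightarrow> (\<forall>k\<ge>N. \<not> bit x k)"
proof -
  have "x < 2^N \<longleftrightarrow> take_bit N x = x" by (simp add: take_bit_nat_eq_self_iff)
  also have "\<dots> \<longleftrightarrow> (\<forall>k\<ge>N. \<not> bit x k)"
  proof
    assume H: "take_bit N x = x"
    show "\<forall>k\<ge>N. \<not> bit x k"
    proof (intro allI impI)
      fix k assume "N \<le> k"
      then have "\<not> bit (take_bit N x) k" by (simp add: bit_take_bit_iff)
      then show "\<not> bit x k" using H by simp
    qed
  next
    assume H: "\<forall>k\<ge>N. \<not> bit x k"
    show "take_bit N x = x"
    proof (rule bit_eqI)
      fix k show "bit (take_bit N x) k = bit x k"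
        using H by (cases "k < N") (auto simp add: bit_take_bit_iff)
    qed
  qed
  finally show ?thesis .
qed

definition pp :: "nat \<Rightarrow> (nat \<Rightarrow> nat) \<Rightarrow> (nat \<Rightarrow> complex) \<Rightarrow> complex mat \<Rightarrow> bool" where
  "pp N f \<phi> M \<longleftrightarrow> M \<in> carrier_mat (2^N) (2^N) \<and> (\<forall>j<2^N. f j < 2^N) \<and>
     (\<forall>i<2^N. \<forall>j<2^N. M $$ (i,j) = (if i = f j then \<phi> j else 0))"

lemma pp_one: "pp N id (\<lambda>_. 1) (1\<^sub>m (2^N))"
  by (auto simp: pp_def)

lemma pp_mult:
  assumes A: "pp N f \<phi> A" and B: "pp N g \<psi> B"
  shows "pp N (f \<circ> g) (\<lambda>j. \<phi> (g j) * \<psi> j) (A * B)"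
  unfolding pp_def
proof (intro conjI allI impI)
  show "A * B \<in> carrier_mat (2^N) (2^N)" using A B by (auto simp: pp_def)
  fix j :: nat assume j: "j < 2^N"
  then show "(f \<circ> g) j < 2^N" using A B by (auto simp: pp_def)
  fix i :: nat assume i: "i < 2^N"
  have gj: "g j < 2^N" using B j by (auto simp: pp_def)
  have "(A * B) $$ (i, j) = (\<Sum>k<2^N. A $$ (i,k) * B $$ (k,j))"
  proof -
    have dA: "dim_row A = 2^N" "dim_col A = 2^N" using A by (auto simp: pp_def)
    have dB: "dim_row B = 2^N" "dim_col B = 2^N" using B by (auto simp: pp_def)
    show ?thesis using dA dB i j
      by (simp add: scalar_prod_def lessThan_atLeast0)
  qed
  also have "\<dots> = (\<Sum>k<2^N. if k = g j then A $$ (i, g j) * \<psi> j else 0)"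
    using B j by (intro sum.cong) (auto simp: pp_def)
  also have "\<dots> = A $$ (i, g j) * \<psi> j" using gj by (simp add: sum.delta)
  also have "\<dots> = (if i = (f \<circ> g) j then \<phi> (g j) * \<psi> j else 0)"
    using A i gj by (simp add: pp_def)
  finally show "(A * B) $$ (i, j) = (if i = (f \<circ> g) j then \<phi> (g j) * \<psi> j else 0)" .
qed

lemma gate2_pp:
  assumes ab: "a < N" "b < N" "a \<noteq> b"
    and U: "\<forall>u<4. \<forall>v<4. U $$ (u,v) = (if u = \<sigma> v then \<psi> v else 0)"
    and Frange: "\<forall>j<2^N. F j < 2^N"
    and Fbits: "\<forall>j k. k \<noteq> a \<longrightarrow> k \<noteq> b \<longrightarrow> bit (F j) k = bit j k"
    and Fab: "\<forall>j. 2 * bitq a (F j) + bitq b (F j) = \<sigma> (2 * bitq a j + bitq b j)"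
  shows "pp N F (\<lambda>j. \<psi> (2 * bitq a j + bitq b j)) (gate2_op N a b U)"
  unfolding pp_def
proof (intro conjI allI impI)
  show "gate2_op N a b U \<in> carrier_mat (2 ^ N) (2 ^ N)" by (simp add: gate2_op_def)
  show "\<And>j. j < 2^N \<Longrightarrow> F j < 2^N" using Frange by auto
  fix i j :: nat assume i: "i < 2^N" and j: "j < 2^N"
  have lt4: "2 * bitq a x + bitq b x < 4" for x by (simp add: bitq_bit)
  have key: "i = F j \<longleftrightarrow> (\<forall>k. k \<noteq> a \<and> k \<noteq> b \<longrightarrow> bitq k i = bitq k j) \<and>
      2 * bitq a i + bitq b i = \<sigma> (2 * bitq a j + bitq b j)"
  proof
    assume ij: "i = F j"
    have c: "\<forall>k. k \<noteq> a \<and> k \<noteq> b \<longrightarrow> bitq k i = bitq k j"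
      using Fbits ij by (simp add: bitq_bit)
    have u: "2 * bitq a i + bitq b i = \<sigma> (2 * bitq a j + bitq b j)" using Fab ij by simp
    show "(\<forall>k. k \<noteq> a \<and> k \<noteq> b \<longrightarrow> bitq k i = bitq k j) \<and>
      2 * bitq a i + bitq b i = \<sigma> (2 * bitq a j + bitq b j)" using c u by blast
  next
    assume H: "(\<forall>k. k \<noteq> a \<and> k \<noteq> b \<longrightarrow> bitq k i = bitq k j) \<and>
      2 * bitq a i + bitq b i = \<sigma> (2 * bitq a j + bitq b j)"
    then have e: "2 * bitq a i + bitq b i = 2 * bitq a (F j) + bitq b (F j)" using Fab by metis
    have "bit i k = bit (F j) k" for k
    proof (cases "k = a \<or> k = b")
      case True
      then show ?thesis using e
        by (cases "bit i a"; cases "bit i b"; cases "bit (F j) a"; cases "bit (F j) b") (auto simp: bitq_bit)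
    next
      case False
      then have "of_bool (bit i k) = (of_bool (bit j k) :: nat)" using H by (simp add: bitq_bit)
      then have "bit i k = bit j k" by (cases "bit i k"; cases "bit j k") auto
      then show ?thesis using Fbits False by simp
    qed
    then show "i = F j" by (simp add: bit_eq_iff)
  qed
  show "gate2_op N a b U $$ (i, j) = (if i = F j then \<psi> (2 * bitq a j + bitq b j) else 0)"
  proof (cases "i = F j")
    case True
    then have c: "(\<forall>k. k \<noteq> a \<and> k \<noteq> b \<longrightarrow> bitq k i = bitq k j)"
      and u: "2 * bitq a i + bitq b i = \<sigma> (2 * bitq a j + bitq b j)" using key by auto
    have "gate2_op N a b U $$ (i, j) = U $$ (2 * bitq a i + bitq b i, 2 * bitq a j + bitq b j)"
      using i j c by (simp add: gate2_op_def)
    also have "\<dots> = \<psi> (2 * bitq a j + bitq b j)" using U lt4 u by metis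
    finally show ?thesis using True by simp
  next
    case False
    show ?thesis
    proof (cases "(\<forall>k. k \<noteq> a \<and> k \<noteq> b \<longrightarrow> bitq k i = bitq k j)")
      case True
      then have u: "2 * bitq a i + bitq b i \<noteq> \<sigma> (2 * bitq a j + bitq b j)" using key False by auto
      have "gate2_op N a b U $$ (i, j) = U $$ (2 * bitq a i + bitq b i, 2 * bitq a j + bitq b j)"
        using i j True by (simp add: gate2_op_def)
      also have "\<dots> = 0" using U lt4 u by metis
      finally show ?thesis using False by simp
    next
      case c: False
      have "gate2_op N a b U $$ (i, j) = (if (\<forall>k. k \<noteq> a \<and> k \<noteq> b \<longrightarrow> bitq k i = bitq k j)
     then U $$ (2 * bitq a i + bitq b i, 2 * bitq a j + bitq b j) else 0)"
        using i j by (simp add: gate2_op_def)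
      also have "\<dots> = 0" by (rule if_not_P[OF c])
      finally have "gate2_op N a b U $$ (i, j) = 0" .
      then show ?thesis using False by simp
    qed
  qed
qed


definition cperm :: "nat \<Rightarrow> nat" where
  "cperm v = (if v = 2 then 3 else if v = 3 then 2 else v)"

definition cnot_mat :: "complex mat" where
  "cnot_mat = mat 4 4 (\<lambda>(u, v). if u = cperm v then 1 else 0)"

definition cflip :: "nat \<Rightarrow> nat \<Rightarrow> nat \<Rightarrow> nat" where
  "cflip a b j = (if bit j a then flip_bit b j else j)"

lemma lt4: "(i::nat) < 4 \<longleftrightarrow> i = 0 \<or> i = 1 \<or> i = 2 \<or> i = 3" by auto

lemma sum4: "(\<Sum>k\<in>{0..<4::nat}. f k) = f 0 + f 1 + f 2 + (f 3 :: complex)"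
  by (simp add: atLeast0LessThan numeral_eq_Suc lessThan_Suc ac_simps)

lemma unitary_cnot: "unitary_mat 4 cnot_mat"
  unfolding unitary_mat_def
proof
  show "cnot_mat \<in> carrier_mat 4 4" by (simp add: cnot_mat_def)
  show "cnot_mat * adj cnot_mat = 1\<^sub>m 4"
  proof (rule eq_matI)
    fix i j :: nat assume i: "i < dim_row (1\<^sub>m 4 :: complex mat)" and j: "j < dim_col (1\<^sub>m 4 :: complex mat)"
    then have "i < 4" "j < 4" by auto
    then show "(cnot_mat * adj cnot_mat) $$ (i, j) = 1\<^sub>m 4 $$ (i, j)"
      unfolding lt4
      by (auto simp: cnot_mat_def adj_def scalar_prod_def sum4 cperm_def)
  qed (auto simp: cnot_mat_def adj_def)
qed

lemma exp_cnj_1: "exp (\<i> * complex_of_real x) * cnj (exp (\<i> * complex_of_real x)) = 1"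
proof -
  have "exp (\<i> * complex_of_real x) = cis x" by (simp add: cis_conv_exp)
  then show ?thesis by (simp add: cis_cnj cis_mult)
qed

lemma unitary_diag: "unitary_mat 4 (diag_gate th)"
  unfolding unitary_mat_def
proof
  show "diag_gate th \<in> carrier_mat 4 4" by (simp add: diag_gate_def)
  show "diag_gate th * adj (diag_gate th) = 1\<^sub>m 4"
  proof (rule eq_matI)
    fix i j :: nat assume i: "i < dim_row (1\<^sub>m 4 :: complex mat)" and j: "j < dim_col (1\<^sub>m 4 :: complex mat)"
    then have "i < 4" "j < 4" by auto
    then show "(diag_gate th * adj (diag_gate th)) $$ (i, j) = 1\<^sub>m 4 $$ (i, j)"
      unfolding lt4
      by (auto simp: diag_gate_def adj_def scalar_prod_def sum4 exp_cnj_1)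
  qed (auto simp: diag_gate_def adj_def)
qed

datatype mg = CN nat nat | DG nat nat "nat \<Rightarrow> real"

fun tog :: "mg \<Rightarrow> gate" where
  "tog (CN a b) = G2 a b cnot_mat"
| "tog (DG a b th) = G2 a b (diag_gate th)"

fun mf :: "mg \<Rightarrow> nat \<Rightarrow> nat" where
  "mf (CN a b) = cflip a b"
| "mf (DG a b th) = id"

fun mp :: "mg \<Rightarrow> nat \<Rightarrow> complex" where
  "mp (CN a b) = (\<lambda>_. 1)"
| "mp (DG a b th) = (\<lambda>j. exp (\<i> * complex_of_real (th (2 * bitq a j + bitq b j))))"

fun goodg :: "nat \<Rightarrow> mg \<Rightarrow> bool" where
  "goodg N (CN a b) \<longleftrightarrow> a < N \<and> b < N \<and> a \<noteq> b"
| "goodg N (DG a b th) \<longleftrightarrow> a < N \<and> b < N \<and> a \<noteq> b"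

lemma goodg_valid: "goodg N g \<Longrightarrow> valid_gate N (tog g)"
  by (cases g) (auto simp: unitary_cnot unitary_diag)

lemma bit_cflip: "a \<noteq> b \<Longrightarrow> bit (cflip a b j) k = (if k = b then (bit j k \<noteq> bit j a) else bit j k)"
  by (auto simp: cflip_def bit_flip_bit_iff)

lemma gate_pp: "goodg N g \<Longrightarrow> pp N (mf g) (mp g) (gate_op N (tog g))"
proof (cases g)
  case (CN a b)
  assume "goodg N g"
  then have ab: "a < N" "b < N" "a \<noteq> b" using CN by auto
  have "pp N (cflip a b) (\<lambda>j. (\<lambda>_. 1) (2 * bitq a j + bitq b j)) (gate2_op N a b cnot_mat)"
  proof (rule gate2_pp[OF ab])
    show "\<forall>u<4. \<forall>v<4. cnot_mat $$ (u, v) = (if u = cperm v then 1 else 0)"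
      by (simp add: cnot_mat_def)
    show "\<forall>j<2 ^ N. cflip a b j < 2 ^ N"
      using ab by (auto simp: less_pow_iff_bits bit_cflip)
    show "\<forall>j k. k \<noteq> a \<longrightarrow> k \<noteq> b \<longrightarrow> bit (cflip a b j) k = bit j k"
      using ab by (auto simp: bit_cflip)
    show "\<forall>j. 2 * bitq a (cflip a b j) + bitq b (cflip a b j) = cperm (2 * bitq a j + bitq b j)"
    proof
      fix j
      show "2 * bitq a (cflip a b j) + bitq b (cflip a b j) = cperm (2 * bitq a j + bitq b j)"
        using ab by (cases "bit j a"; cases "bit j b") (auto simp: bitq_bit bit_cflip cperm_def)
    qed
  qed
  then show ?thesis using CN by simp
next
  case (DG a b th)
  assume "goodg N g"
  then have ab: "a < N" "b < N" "a \<noteq> b" using DG by auto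
  have "pp N id (\<lambda>j. (\<lambda>v. exp (\<i> * complex_of_real (th v))) (2 * bitq a j + bitq b j)) (gate2_op N a b (diag_gate th))"
    by (rule gate2_pp[OF ab]) (auto simp: diag_gate_def)
  then show ?thesis using DG by simp
qed

fun Fl :: "mg list \<Rightarrow> nat \<Rightarrow> nat" where
  "Fl [] = id"
| "Fl (g # gs) = mf g \<circ> Fl gs"

fun Pl :: "mg list \<Rightarrow> nat \<Rightarrow> complex" where
  "Pl [] = (\<lambda>_. 1)"
| "Pl (g # gs) = (\<lambda>j. mp g (Fl gs j) * Pl gs j)"

lemma Fl_append: "Fl (xs @ ys) = Fl xs \<circ> Fl ys"
  by (induction xs) auto

lemma Pl_append: "Pl (xs @ ys) j = Pl xs (Fl ys j) * Pl ys j"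
  by (induction xs) (auto simp: Fl_append)

lemma layer_pp: "\<forall>g\<in>set gs. goodg N g \<Longrightarrow> pp N (Fl gs) (Pl gs) (layer_op N (map tog gs))"
proof (induction gs)
  case Nil
  then show ?case by (simp add: layer_op_def pp_def)
next
  case (Cons g gs)
  then have "pp N (mf g \<circ> Fl gs) (\<lambda>j. mp g (Fl gs j) * Pl gs j) (gate_op N (tog g) * layer_op N (map tog gs))"
    by (intro pp_mult gate_pp) auto
  then show ?case by (simp add: layer_op_def comp_def)
qed

lemma circuit_pp: "\<forall>L\<in>set Ls. \<forall>g\<in>set L. goodg N g \<Longrightarrow>
   pp N (Fl (concat Ls)) (Pl (concat Ls)) (circuit_op N (map (map tog) Ls))"
proof (induction Ls)
  case Nil
  then show ?case by (simp add: circuit_op_def pp_def)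
next
  case (Cons L Ls)
  then have "pp N (Fl L \<circ> Fl (concat Ls)) (\<lambda>j. Pl L (Fl (concat Ls) j) * Pl (concat Ls) j)
      (layer_op N (map tog L) * circuit_op N (map (map tog) Ls))"
    by (intro pp_mult layer_pp) auto
  then show ?case by (simp add: circuit_op_def Fl_append Pl_append comp_def)
qed

lemma pp_diag_mult_vec:
  assumes "pp N id \<phi> M" and "v \<in> carrier_vec (2^N)"
  shows "M *\<^sub>v v = vec (2^N) (\<lambda>i. \<phi> i * v $ i)"
proof (rule eq_vecI)
  show "dim_vec (M *\<^sub>v v) = dim_vec (vec (2 ^ N) (\<lambda>i. \<phi> i * v $ i))"
    using assms by (auto simp: pp_def)
  fix i assume "i < dim_vec (vec (2 ^ N) (\<lambda>i. \<phi> i * v $ i))"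
  then have i: "i < 2^N" by simp
  have dM: "dim_row M = 2^N" "dim_col M = 2^N" using assms by (auto simp: pp_def)
  have "(M *\<^sub>v v) $ i = (\<Sum>k\<in>{0..<2^N}. M $$ (i,k) * v $ k)"
    using dM i assms(2) by (simp add: scalar_prod_def)
  also have "\<dots> = (\<Sum>k\<in>{0..<2^N}. if k = i then \<phi> i * v $ i else 0)"
    using assms(1) i by (intro sum.cong) (auto simp: pp_def)
  also have "\<dots> = \<phi> i * v $ i" using i by (simp add: sum.delta)
  finally show "(M *\<^sub>v v) $ i = vec (2 ^ N) (\<lambda>i. \<phi> i * v $ i) $ i" using i by simp
qed

lemma embeds_pp:
  assumes M: "pp (n' + m) id \<phi> M" and F: "pp n' id \<rho> F"
    and eq: "\<forall>j<2^n'. \<phi> j = \<rho> j"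
  shows "embeds n' m F M"
  unfolding embeds_def
proof
  fix \<psi> :: "complex vec" assume psi: "\<psi> \<in> carrier_vec (2 ^ n')"
  have pc: "pad_anc n' m \<psi> \<in> carrier_vec (2^(n'+m))" by (simp add: pad_anc_def)
  have "(2::nat)^n' \<le> 2^(n'+m)" by (simp add: power_increasing)
  note le = this
  have "M *\<^sub>v pad_anc n' m \<psi> = vec (2^(n'+m)) (\<lambda>i. \<phi> i * pad_anc n' m \<psi> $ i)"
    by (rule pp_diag_mult_vec[OF M pc])
  also have "\<dots> = pad_anc n' m (F *\<^sub>v \<psi>)"
    unfolding pp_diag_mult_vec[OF F psi]
  proof (rule eq_vecI)
    fix i assume "i < dim_vec (pad_anc n' m (vec (2 ^ n') (\<lambda>i. \<rho> i * \<psi> $ i)))"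
    then have i: "i < 2^(n'+m)" by (simp add: pad_anc_def)
    show "vec (2 ^ (n' + m)) (\<lambda>i. \<phi> i * pad_anc n' m \<psi> $ i) $ i =
         pad_anc n' m (vec (2 ^ n') (\<lambda>i. \<rho> i * \<psi> $ i)) $ i"
      using i eq by (simp add: pad_anc_def)
  qed (simp add: pad_anc_def)
  finally show "M *\<^sub>v pad_anc n' m \<psi> = pad_anc n' m (F *\<^sub>v \<psi>)" .
qed


lemma cn_bits:
  assumes "distinct (map tb xs)" and "\<forall>i\<in>set xs. \<forall>i'\<in>set xs. ca i \<noteq> tb i'"
  shows "(\<forall>i\<in>set xs. bit (Fl (map (\<lambda>i. CN (ca i) (tb i)) xs) y) (tb i) = (bit y (tb i) \<noteq> bit y (ca i))) \<and>
         (\<forall>k. k \<notin> tb ` set xs \<longrightarrow> bit (Fl (map (\<lambda>i. CN (ca i) (tb i)) xs) y) k = bit y k)"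
  using assms
proof (induction xs)
  case Nil
  then show ?case by simp
next
  case (Cons i xs)
  let ?z = "Fl (map (\<lambda>i. CN (ca i) (tb i)) xs) y"
  have IH: "(\<forall>i\<in>set xs. bit ?z (tb i) = (bit y (tb i) \<noteq> bit y (ca i))) \<and>
         (\<forall>k. k \<notin> tb ` set xs \<longrightarrow> bit ?z k = bit y k)"
    using Cons by auto
  have ne: "ca i \<noteq> tb i" using Cons.prems by auto
  have ti: "tb i \<notin> tb ` set xs" using Cons.prems by auto
  have ci: "ca i \<notin> tb ` set xs" using Cons.prems by auto
  have eq: "Fl (map (\<lambda>i. CN (ca i) (tb i)) (i # xs)) y = cflip (ca i) (tb i) ?z" by simp
  show ?case
    unfolding eq
  proof (intro conjI ballI allI impI)
    fix i' assume i': "i' \<in> set (i # xs)"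
    show "bit (cflip (ca i) (tb i) ?z) (tb i') = (bit y (tb i') \<noteq> bit y (ca i'))"
    proof (cases "i' = i")
      case True
      then show ?thesis using IH ti ci ne by (simp add: bit_cflip)
    next
      case False
      then have "i' \<in> set xs" using i' by auto
      moreover have "tb i' \<noteq> tb i" using ti \<open>i' \<in> set xs\<close> by (metis image_eqI)
      ultimately show ?thesis using IH ne by (simp add: bit_cflip)
    qed
  next
    fix k assume k: "k \<notin> tb ` set (i # xs)"
    then show "bit (cflip (ca i) (tb i) ?z) k = bit y k" using IH ne by (auto simp: bit_cflip)
  qed
qed

definition cc :: "nat \<Rightarrow> nat \<Rightarrow> nat \<Rightarrow> nat" where
  "cc n q j = (if j = 0 then q else n + j)"

definition Lr :: "nat \<Rightarrow> nat \<Rightarrow> nat \<Rightarrow> mg list" where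
  "Lr n q r = map (\<lambda>j. CN (cc n q j) (n + j + 2^r)) [0..<2^r]"

definition FBr :: "nat \<Rightarrow> nat \<Rightarrow> nat \<Rightarrow> nat \<Rightarrow> nat" where
  "FBr n q r = Fl (concat (rev (map (Lr n q) [0..<r])))"

definition Inv :: "nat \<Rightarrow> nat \<Rightarrow> nat \<Rightarrow> nat \<Rightarrow> nat \<Rightarrow> bool" where
  "Inv n q r x y \<longleftrightarrow> (\<forall>k\<le>n. bit y k = bit x k) \<and> (\<forall>j. 1 \<le> j \<and> j < 2^r \<longrightarrow> bit y (n+j) = bit x q)
     \<and> (\<forall>j\<ge>2^r. \<not> bit y (n+j))"

lemma FBr_0: "FBr n q 0 = id" by (simp add: FBr_def)

lemma FBr_Suc: "FBr n q (Suc r) = Fl (Lr n q r) \<circ> FBr n q r"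
  by (simp add: FBr_def Fl_append)

lemma inv_step:
  assumes q: "q \<le> n" and I: "Inv n q r x y"
  shows "Inv n q (Suc r) x (Fl (Lr n q r) y)"
proof -
  let ?tb = "\<lambda>j. n + j + 2^r"
  let ?xs = "[0..<2^r]"
  let ?z = "Fl (Lr n q r) y"
  have Lr_eq: "Lr n q r = map (\<lambda>i. CN (cc n q i) (?tb i)) ?xs" by (simp add: Lr_def)
  have d: "distinct (map ?tb ?xs)" by (simp add: distinct_map inj_on_def)
  have cd: "\<forall>i\<in>set ?xs. \<forall>i'\<in>set ?xs. cc n q i \<noteq> ?tb i'" using q by (auto simp: cc_def)
  have T: "\<forall>j\<in>set ?xs. bit ?z (?tb j) = (bit y (?tb j) \<noteq> bit y (cc n q j))"
    and U: "\<forall>k. k \<notin> ?tb ` set ?xs \<longrightarrow> bit ?z k = bit y k"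
    using cn_bits[OF d cd, of y] unfolding Lr_eq by auto
  have I1: "\<forall>k\<le>n. bit y k = bit x k" and I2: "\<forall>j. 1 \<le> j \<and> j < 2^r \<longrightarrow> bit y (n+j) = bit x q"
    and I3: "\<forall>j\<ge>2^r. \<not> bit y (n+j)" using I by (auto simp: Inv_def)
  have A: "\<forall>k\<le>n. bit ?z k = bit x k"
  proof (intro allI impI)
    fix k assume "k \<le> n"
    then have "k \<notin> ?tb ` set ?xs" by auto
    then show "bit ?z k = bit x k" using U I1 \<open>k \<le> n\<close> by simp
  qed
  have B: "\<forall>j. 1 \<le> j \<and> j < 2^(Suc r) \<longrightarrow> bit ?z (n+j) = bit x q"
  proof (intro allI impI)
    fix j :: nat assume j: "1 \<le> j \<and> j < 2^(Suc r)"
    show "bit ?z (n+j) = bit x q"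
    proof (cases "j < 2^r")
      case True
      then have "n + j \<notin> ?tb ` set ?xs" by auto
      then show ?thesis using U I2 j True by simp
    next
      case False
      define j' where "j' = j - 2^r"
      have j': "j' < 2^r" "n + j = ?tb j'" using False j by (auto simp: j'_def)
      have e: "bit ?z (?tb j') = (bit y (?tb j') \<noteq> bit y (cc n q j'))" using T j'(1) by simp
      have "bit ?z (n+j) = (bit y (n + j) \<noteq> bit y (cc n q j'))" unfolding j'(2) by (rule e)
      also have "\<dots> = bit y (cc n q j')" using I3 False by simp
      also have "\<dots> = bit x q"
      proof (cases "j' = 0")
        case True
        then show ?thesis using I1 q by (simp add: cc_def)
      next
        case False
        then show ?thesis using I2 j' by (simp add: cc_def)
      qed
      finally show ?thesis .
    qed
  qed
  have C: "\<forall>j\<ge>2^(Suc r). \<not> bit ?z (n+j)"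
  proof (intro allI impI)
    fix j :: nat assume j: "2^(Suc r) \<le> j"
    then have "n + j \<notin> ?tb ` set ?xs" by auto
    then show "\<not> bit ?z (n+j)" using U I3 j by simp
  qed
  show ?thesis using A B C by (simp add: Inv_def)
qed

lemma inv_all:
  assumes q: "q \<le> n" and x: "x < 2^(n+1)"
  shows "Inv n q r x (FBr n q r x)"
proof (induction r)
  case 0
  have xb: "\<forall>k\<ge>n+1. \<not> bit x k" using x less_pow_iff_bits by blast
  have "\<forall>j\<ge>1. \<not> bit x (n+j)"
  proof (intro allI impI)
    fix j :: nat assume "1 \<le> j" then show "\<not> bit x (n+j)" using xb by simp
  qed
  then show ?case by (simp add: Inv_def FBr_0)
next
  case (Suc r)
  then show ?case using inv_step[OF q Suc] by (simp add: FBr_Suc)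
qed


lemma cflip_invol: "a \<noteq> b \<Longrightarrow> cflip a b (cflip a b y) = y"
  by (rule bit_eqI) (auto simp: bit_cflip)

definition allcn :: "mg list \<Rightarrow> bool" where
  "allcn gs \<longleftrightarrow> (\<forall>g\<in>set gs. \<exists>a b. g = CN a b \<and> a \<noteq> b)"

lemma Fl_rev_inv: "allcn gs \<Longrightarrow> Fl (rev gs) (Fl gs x) = x"
proof (induction gs arbitrary: x)
  case Nil
  then show ?case by simp
next
  case (Cons g gs)
  obtain a b where g: "g = CN a b" "a \<noteq> b" using Cons.prems by (auto simp: allcn_def)
  have "allcn gs" using Cons.prems by (auto simp: allcn_def)
  have "Fl (rev (g # gs)) (Fl (g # gs) x) = Fl (rev gs) (cflip a b (cflip a b (Fl gs x)))"
    using g by (simp add: Fl_append)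
  also have "\<dots> = Fl (rev gs) (Fl gs x)" using g by (simp add: cflip_invol)
  also have "\<dots> = x" using Cons.IH \<open>allcn gs\<close> by simp
  finally show ?case .
qed

lemma Pl_cn: "allcn gs \<Longrightarrow> Pl gs j = 1"
proof (induction gs arbitrary: j)
  case Nil
  then show ?case by simp
next
  case (Cons g gs)
  obtain a b where g: "g = CN a b" using Cons.prems by (auto simp: allcn_def)
  have "allcn gs" using Cons.prems by (auto simp: allcn_def)
  then show ?case using Cons.IH g by simp
qed

lemma Fl_dg: "Fl (map (\<lambda>i. DG (a i) (b i) (th i)) xs) = id"
  by (induction xs) auto

lemma Pl_dg: "Pl (map (\<lambda>i. DG (a i) (b i) (th i)) xs) y =
   prod_list (map (\<lambda>i. exp (\<i> * complex_of_real (th i (2 * bitq (a i) y + bitq (b i) y)))) xs)"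
  by (induction xs) (auto simp: Fl_dg)

fun msupp :: "mg \<Rightarrow> nat set" where
  "msupp (CN a b) = {a, b}"
| "msupp (DG a b th) = {a, b}"

lemma supp_tog: "gate_supp (tog g) = msupp g"
  by (cases g) auto

lemma valid_layer_mg:
  assumes "\<forall>g\<in>set gs. goodg N g" and "distinct gs"
    and "\<forall>g\<in>set gs. \<forall>g'\<in>set gs. g \<noteq> g' \<longrightarrow> msupp g \<inter> msupp g' = {}"
  shows "valid_layer N (map tog gs)"
  unfolding valid_layer_def
proof (intro conjI ballI allI impI)
  fix g assume "g \<in> set (map tog gs)"
  then show "valid_gate N g" using assms(1) goodg_valid by auto
next
  fix i j assume i: "i < length (map tog gs)" and j: "j < length (map tog gs)" and ij: "i \<noteq> j"
  have "gs ! i \<noteq> gs ! j" using assms(2) i j ij by (simp add: nth_eq_iff_index_eq)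
  moreover have "gs ! i \<in> set gs" "gs ! j \<in> set gs" using i j by auto
  ultimately have "msupp (gs ! i) \<inter> msupp (gs ! j) = {}" using assms(3) by blast
  then show "gate_supp (map tog gs ! i) \<inter> gate_supp (map tog gs ! j) = {}"
    using i j by (simp add: supp_tog)
qed

lemma Lr_props:
  assumes q: "q \<le> n" and r: "r < K"
  shows "(\<forall>g\<in>set (Lr n q r). goodg (n + 2^K) g) \<and> distinct (Lr n q r) \<and>
    (\<forall>g\<in>set (Lr n q r). \<forall>g'\<in>set (Lr n q r). g \<noteq> g' \<longrightarrow> msupp g \<inter> msupp g' = {}) \<and> allcn (Lr n q r)"
proof -
  have pK: "(2::nat)^(Suc r) \<le> 2^K" using r by (intro power_increasing) auto
  have A: "\<forall>g\<in>set (Lr n q r). goodg (n + 2^K) g"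
  proof
    fix g assume "g \<in> set (Lr n q r)"
    then obtain j where j: "j < 2^r" "g = CN (cc n q j) (n + j + 2^r)" by (auto simp: Lr_def)
    have "j + 2^r < 2^K" using j pK by simp
    then show "goodg (n + 2^K) g" using j q by (auto simp: cc_def)
  qed
  have B: "distinct (Lr n q r)" by (auto simp: Lr_def distinct_map inj_on_def)
  have C: "\<forall>g\<in>set (Lr n q r). \<forall>g'\<in>set (Lr n q r). g \<noteq> g' \<longrightarrow> msupp g \<inter> msupp g' = {}"
  proof (intro ballI impI)
    fix g g' assume g: "g \<in> set (Lr n q r)" and g': "g' \<in> set (Lr n q r)" and ne: "g \<noteq> g'"
    obtain j where j: "j < 2^r" "g = CN (cc n q j) (n + j + 2^r)" using g by (auto simp: Lr_def)
    obtain j' where j': "j' < 2^r" "g' = CN (cc n q j') (n + j' + 2^r)" using g' by (auto simp: Lr_def)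
    have "j \<noteq> j'" using ne j j' by auto
    then show "msupp g \<inter> msupp g' = {}" using j j' q by (auto simp: cc_def)
  qed
  have D: "allcn (Lr n q r)" using q by (auto simp: Lr_def allcn_def cc_def)
  show ?thesis using A B C D by blast
qed

lemma Dl_props:
  fixes th :: "nat \<Rightarrow> nat \<Rightarrow> real"
  assumes q: "q \<le> n" and t: "\<forall>i\<in>{1..n}. t i \<le> n \<and> t i \<noteq> q" and inj: "inj_on t {1..n}"
    and nK: "n \<le> 2^K"
  defines "Dl \<equiv> map (\<lambda>i. DG (cc n q (i - 1)) (t i) (th i)) (rev [1..<n+1])"
  shows "(\<forall>g\<in>set Dl. goodg (n + 2^K) g) \<and> distinct Dl \<and>
    (\<forall>g\<in>set Dl. \<forall>g'\<in>set Dl. g \<noteq> g' \<longrightarrow> msupp g \<inter> msupp g' = {})"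
proof -
  have A: "\<forall>g\<in>set Dl. goodg (n + 2^K) g"
  proof
    fix g assume "g \<in> set Dl"
    then obtain i where i: "1 \<le> i" "i \<le> n" "g = DG (cc n q (i - 1)) (t i) (th i)" by (auto simp: Dl_def)
    have "t i \<le> n" "t i \<noteq> q" using t i by auto
    then show "goodg (n + 2^K) g" using i q nK by (auto simp: cc_def)
  qed
  have "inj_on (\<lambda>i. DG (cc n q (i - 1)) (t i) (th i)) (set (rev [1..<n+1]))"
  proof (rule inj_onI)
    fix i i' assume i: "i \<in> set (rev [1..<n+1])" and i': "i' \<in> set (rev [1..<n+1])"
      and e: "DG (cc n q (i - 1)) (t i) (th i) = DG (cc n q (i' - 1)) (t i') (th i')"
    then have "t i = t i'" by simp
    moreover have "i \<in> {1..n}" "i' \<in> {1..n}" using i i' by auto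
    ultimately show "i = i'" using inj by (simp add: inj_on_eq_iff)
  qed
  then have B: "distinct Dl" unfolding Dl_def by (simp add: distinct_map)
  have C: "\<forall>g\<in>set Dl. \<forall>g'\<in>set Dl. g \<noteq> g' \<longrightarrow> msupp g \<inter> msupp g' = {}"
  proof (intro ballI impI)
    fix g g' assume g: "g \<in> set Dl" and g': "g' \<in> set Dl" and ne: "g \<noteq> g'"
    obtain i where i: "1 \<le> i" "i \<le> n" "g = DG (cc n q (i - 1)) (t i) (th i)" using g by (auto simp: Dl_def)
    obtain i' where i': "1 \<le> i'" "i' \<le> n" "g' = DG (cc n q (i' - 1)) (t i') (th i')" using g' by (auto simp: Dl_def)
    have ii: "i \<noteq> i'"
    proof
      assume "i = i'" then have "g = g'" using i(3) i'(3) by simp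
      then show False using ne by simp
    qed
    have "i \<in> {1..n}" "i' \<in> {1..n}" using i i' by auto
    then have tt: "t i \<noteq> t i'" using inj ii by (simp add: inj_on_eq_iff)
    have ti: "t i \<le> n" "t i \<noteq> q" "t i' \<le> n" "t i' \<noteq> q" using t i i' by auto
    have c1: "cc n q (i - 1) \<noteq> cc n q (i' - 1)" using ii i(1,2) i'(1,2) q by (auto simp: cc_def)
    have c2: "cc n q (i - 1) \<noteq> t i'" using ti i(1,2) by (auto simp: cc_def)
    have c3: "cc n q (i' - 1) \<noteq> t i" using ti i'(1,2) by (auto simp: cc_def)
    show "msupp g \<inter> msupp g' = {}" using i(3) i'(3) c1 c2 c3 tt by auto
  qed
  show ?thesis using A B C by blast
qed

lemma concat_map_rev: "concat (map rev X) = rev (concat (rev X))"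
  by (induction X) auto


lemma main_construction:
  fixes th :: "nat \<Rightarrow> nat \<Rightarrow> real"
  assumes n2: "n \<ge> 2" and q: "q \<le> n" and t: "\<forall>i\<in>{1..n}. t i \<le> n \<and> t i \<noteq> q"
    and inj: "inj_on t {1..n}"
  shows "\<exists>(m::nat) (C::gate list list). real m \<le> 2 * real n \<and>
     real (length C) * ln 2 \<le> 5 * ln (real n) \<and>
     (\<forall>L \<in> set C. valid_layer (n + 1 + m) L) \<and>
     embeds (n + 1) m (diag_product n q t th) (circuit_op (n + 1 + m) C)"
proof -
  define K where "K = (LEAST K. n \<le> 2^K)"
  have nK: "n \<le> 2^K" unfolding K_def by (rule LeastI[of _ n]) (simp add: less_imp_le)
  have K0: "K \<noteq> 0" using nK n2 by (cases K) auto
  have Km: "\<not> n \<le> 2^(K-1)" unfolding K_def by (rule not_less_Least) (use K0 in \<open>simp add: K_def\<close>)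
  have pK: "(2::nat)^K = 2 * 2^(K-1)" using K0 by (cases K) auto
  define m :: nat where "m = 2^K - 1"
  have N: "n + 1 + m = n + 2^K" unfolding m_def by simp
  define Dl where "Dl = map (\<lambda>i. DG (cc n q (i - 1)) (t i) (th i)) (rev [1..<n+1])"
  define Dq where "Dq = map (\<lambda>i. DG q (t i) (th i)) (rev [1..<n+1])"
  define B where "B = concat (rev (map (Lr n q) [0..<K]))"
  define Cm where "Cm = map rev (map (Lr n q) [0..<K]) @ [Dl] @ rev (map (Lr n q) [0..<K])"
  define C where "C = map (map tog) Cm"
  have lenC: "length C = 2 * K + 1" by (simp add: C_def Cm_def)
  have concatC: "concat Cm = rev B @ Dl @ B"
    unfolding Cm_def B_def by (simp only: concat_map_rev concat_append concat.simps append_Nil2 append_assoc)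
  have LP: "\<And>r. r < K \<Longrightarrow> (\<forall>g\<in>set (Lr n q r). goodg (n + 2^K) g) \<and> distinct (Lr n q r) \<and>
    (\<forall>g\<in>set (Lr n q r). \<forall>g'\<in>set (Lr n q r). g \<noteq> g' \<longrightarrow> msupp g \<inter> msupp g' = {}) \<and> allcn (Lr n q r)"
    using Lr_props[OF q] by blast
  have DP: "(\<forall>g\<in>set Dl. goodg (n + 2^K) g) \<and> distinct Dl \<and>
    (\<forall>g\<in>set Dl. \<forall>g'\<in>set Dl. g \<noteq> g' \<longrightarrow> msupp g \<inter> msupp g' = {})"
    unfolding Dl_def by (rule Dl_props[OF q t inj nK])
  have allB: "allcn B"
    using LP unfolding B_def allcn_def by fastforce
  have goodC: "\<forall>L\<in>set Cm. \<forall>g\<in>set L. goodg (n + 2^K) g"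
    using LP DP unfolding Cm_def by fastforce
  have valid: "\<forall>L \<in> set C. valid_layer (n + 1 + m) L"
  proof
    fix L assume "L \<in> set C"
    then obtain L' where L': "L' \<in> set Cm" "L = map tog L'" unfolding C_def set_map by blast
    have cs: "(\<exists>r<K. L' = rev (Lr n q r)) \<or> L' = Dl \<or> (\<exists>r<K. L' = Lr n q r)"
      using L'(1) unfolding Cm_def by auto
    have "(\<forall>g\<in>set L'. goodg (n + 2^K) g) \<and> distinct L' \<and>
      (\<forall>g\<in>set L'. \<forall>g'\<in>set L'. g \<noteq> g' \<longrightarrow> msupp g \<inter> msupp g' = {})"
    proof -
      { fix r assume r: "r < K" and e: "L' = rev (Lr n q r)"
        have ?thesis using LP[OF r] unfolding e set_rev distinct_rev by blast }
      moreover
      { fix r assume r: "r < K" and e: "L' = Lr n q r"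
        have ?thesis using LP[OF r] unfolding e by blast }
      moreover
      { assume e: "L' = Dl"
        have ?thesis using DP unfolding e by blast }
      ultimately show ?thesis using cs by blast
    qed
    then show "valid_layer (n + 1 + m) L" unfolding N L'(2)
      by (intro valid_layer_mg) auto
  qed
  have ppC: "pp (n + 2^K) (Fl (concat Cm)) (Pl (concat Cm)) (circuit_op (n + 2^K) C)"
    unfolding C_def by (rule circuit_pp[OF goodC])
  have FlC: "Fl (concat Cm) = id"
  proof
    fix x
    have "Fl (concat Cm) x = Fl (rev B) (Fl Dl (Fl B x))" by (simp add: concatC Fl_append)
    also have "\<dots> = x" using Fl_rev_inv[OF allB] by (simp add: Dl_def Fl_dg)
    finally show "Fl (concat Cm) x = id x" by simp
  qed
  have allrB: "allcn (rev B)" using allB by (simp add: allcn_def)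
  have PlC: "Pl (concat Cm) x = Pl Dl (FBr n q K x)" for x
    by (simp add: concatC Pl_append Fl_append Pl_cn[OF allB] Pl_cn[OF allrB] FBr_def B_def[symmetric])
  have diagP: "diag_product n q t th = layer_op (n + 1) (map tog Dq)"
    by (simp add: diag_product_def layer_op_def Dq_def foldr_map comp_def)
  have goodDq: "\<forall>g\<in>set Dq. goodg (n + 1) g"
  proof
    fix g assume "g \<in> set Dq"
    then obtain i where i: "1 \<le> i" "i \<le> n" "g = DG q (t i) (th i)" by (auto simp: Dq_def)
    have "t i \<le> n" "t i \<noteq> q" using t i(1,2) by auto
    then show "goodg (n + 1) g" using i(3) q by auto
  qed
  have ppD: "pp (n + 1) id (Pl Dq) (diag_product n q t th)"
    using layer_pp[OF goodDq] unfolding diagP by (simp add: Dq_def Fl_dg)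
  have ppC': "pp (n + 1 + m) id (\<lambda>x. Pl Dl (FBr n q K x)) (circuit_op (n + 1 + m) C)"
  proof -
    have e: "Pl (concat Cm) = (\<lambda>x. Pl Dl (FBr n q K x))" by (rule ext) (rule PlC)
    show ?thesis using ppC unfolding N FlC e .
  qed
  have eqph: "\<forall>j<2^(n+1). Pl Dl (FBr n q K j) = Pl Dq j"
  proof (intro allI impI)
    fix j :: nat assume j: "j < 2^(n+1)"
    have I: "Inv n q K j (FBr n q K j)" by (rule inv_all[OF q j])
    have "\<forall>i\<in>set (rev [1..<n+1]).
      exp (\<i> * complex_of_real (th i (2 * bitq (cc n q (i - 1)) (FBr n q K j) + bitq (t i) (FBr n q K j)))) =
      exp (\<i> * complex_of_real (th i (2 * bitq q j + bitq (t i) j)))"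
    proof
      fix i assume "i \<in> set (rev [1..<n+1])"
      then have i: "1 \<le> i" "i \<le> n" by auto
      have b1: "bit (FBr n q K j) (cc n q (i - 1)) = bit j q"
      proof (cases "i = 1")
        case True
        then show ?thesis using I q by (simp add: Inv_def cc_def)
      next
        case False
        then have h: "1 \<le> i - 1 \<and> i - 1 < 2^K" using i nK by auto
        have I2: "\<forall>ja. 1 \<le> ja \<and> ja < 2^K \<longrightarrow> bit (FBr n q K j) (n + ja) = bit j q"
          using I unfolding Inv_def by blast
        have ce: "cc n q (i - 1) = n + (i - 1)" using False i unfolding cc_def by auto
        show ?thesis unfolding ce using I2 h by blast
      qed
      have b2: "bit (FBr n q K j) (t i) = bit j (t i)" using I t i by (simp add: Inv_def)
      show "exp (\<i> * complex_of_real (th i (2 * bitq (cc n q (i - 1)) (FBr n q K j) + bitq (t i) (FBr n q K j)))) =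
      exp (\<i> * complex_of_real (th i (2 * bitq q j + bitq (t i) j)))"
        using b1 b2 by (simp add: bitq_bit)
    qed
    note H = this
    show "Pl Dl (FBr n q K j) = Pl Dq j"
      unfolding Dl_def Dq_def Pl_dg
      by (rule arg_cong[where f=prod_list], rule map_cong[OF refl]) (use H in blast)
  qed
  have emb: "embeds (n + 1) m (diag_product n q t th) (circuit_op (n + 1 + m) C)"
    by (rule embeds_pp[OF ppC' ppD eqph])
  have mb: "real m \<le> 2 * real n"
  proof -
    have "m \<le> 2 * n" using pK Km unfolding m_def by linarith
    then show ?thesis by simp
  qed
  have lb: "real (length C) * ln 2 \<le> 5 * ln (real n)"
  proof -
    have "real (2^(K-1)) < real n" using Km by simp
    then have "ln (real (2^(K-1))) < ln (real n)" by simp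
    then have h1: "real (K-1) * ln 2 < ln (real n)" by (simp add: ln_realpow)
    have h2: "ln 2 \<le> ln (real n)" using n2 by simp
    have "real (length C) = 2 * real (K-1) + 3" using lenC K0 by (cases K) auto
    then have "real (length C) * ln 2 = 2 * (real (K-1) * ln 2) + 3 * ln 2" by (simp add: algebra_simps)
    then show ?thesis using h1 h2 by linarith
  qed
  show ?thesis using mb lb valid emb by blast
qed


theorem proposition3:
  shows "\<exists>c::real. c > 0 \<and>
    (\<forall>n::nat. n \<ge> 2 \<longrightarrow>
      (\<forall>(q::nat) (t::nat \<Rightarrow> nat) (th::nat \<Rightarrow> nat \<Rightarrow> real).
         q \<le> n \<longrightarrow> (\<forall>i\<in>{1..n}. t i \<le> n \<and> t i \<noteq> q) \<longrightarrow> inj_on t {1..n} \<longrightarrow>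
         (\<exists>(m::nat) (C::gate list list).
            real m \<le> c * real n \<and>
            real (length C) \<le> c * ln (real n) \<and>
            (\<forall>L \<in> set C. valid_layer (n + 1 + m) L) \<and>
            embeds (n + 1) m (diag_product n q t th) (circuit_op (n + 1 + m) C))))"
proof (intro exI[of _ "2 + 5 / ln 2"] conjI allI impI)
  have l2: "ln (2::real) > 0" by simp
  then show "(0::real) < 2 + 5 / ln 2" by (simp add: add_pos_pos)
  fix n :: nat and q :: nat and t :: "nat \<Rightarrow> nat" and th :: "nat \<Rightarrow> nat \<Rightarrow> real"
  assume n2: "n \<ge> 2" and q: "q \<le> n" and t: "\<forall>i\<in>{1..n}. t i \<le> n \<and> t i \<noteq> q"
    and inj: "inj_on t {1..n}"
  obtain m C where mb: "real m \<le> 2 * real n" and lb: "real (length C) * ln 2 \<le> 5 * ln (real n)"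
    and v: "\<forall>L \<in> set C. valid_layer (n + 1 + m) L"
    and e: "embeds (n + 1) m (diag_product n q t th) (circuit_op (n + 1 + m) C)"
    using main_construction[OF n2 q t inj, of th] by blast
  have lnn: "ln (real n) \<ge> 0" using n2 by simp
  have "real m \<le> (2 + 5 / ln 2) * real n"
  proof -
    have "0 \<le> 5 / ln 2 * real n" using l2 by simp
    moreover have "(2 + 5 / ln 2) * real n = 2 * real n + 5 / ln 2 * real n" by (simp add: distrib_right)
    ultimately show ?thesis using mb by linarith
  qed
  moreover have "real (length C) \<le> (2 + 5 / ln 2) * ln (real n)"
  proof -
    have "real (length C) \<le> 5 * ln (real n) / ln 2" using lb l2 by (simp add: pos_le_divide_eq)
    also have "\<dots> = 5 / ln 2 * ln (real n)" by simp
    also have "\<dots> \<le> (2 + 5 / ln 2) * ln (real n)"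
    proof -
      have "(2 + 5 / ln 2) * ln (real n) = 2 * ln (real n) + 5 / ln 2 * ln (real n)" by (simp add: distrib_right)
      then show ?thesis using lnn by linarith
    qed
    finally show ?thesis .
  qed
  ultimately show "\<exists>(m::nat) (C::gate list list).
            real m \<le> (2 + 5 / ln 2) * real n \<and>
            real (length C) \<le> (2 + 5 / ln 2) * ln (real n) \<and>
            (\<forall>L \<in> set C. valid_layer (n + 1 + m) L) \<and>
            embeds (n + 1) m (diag_product n q t th) (circuit_op (n + 1 + m) C)"
    using v e by blast
qed

end
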